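(* Let $X$ and $B$ be real Banach spaces. Assume that $f:X\rightarrow B$ is a $C^{1}$ mapping (continuously Fréchet differentiable), that $\eta:B\rightarrow \mathbb{R}_{+}$ is a $C^{1}$ functional, and that the following conditions hold: (c1) for $x\in B$, $\eta(x)=0$ if and only if $x=0$, and $\eta'(x)=0$ if and only if $x=0$; (c2) for every $y\in B$ the functional $\varphi:X\rightarrow\mathbb{R}$, $\varphi(x)=\eta(f(x)-y)$, satisfies the Palais–Smale condition; (c3) for every $x\in X$ the Fréchet derivative $f'(x)$ is surjective, i.e. $f'(x)X=B$, and there exists a constant $\alpha_x>0$ such that $\|f'(x)h\|\geq \alpha_x\|h\|$ for all $h\in X$; (c4) there exist positive constants $\alpha$, $c$, $M$ such that $\eta(x)\geq c\|x\|^{\alpha}$ for all $x\in B$ with $\|x\|\leq M$. Then $f$ is a diffeomorphism.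
   Context: A map $f:X\rightarrow B$ between Banach spaces is a diffeomorphism if it is a continuously Fréchet differentiable bijection whose inverse $f^{-1}:B\rightarrow X$ is also continuously Fréchet differentiable. A functional $J:X\rightarrow\mathbb{R}$ of class $C^1$ satisfies the Palais–Smale condition if every sequence $(u_n)$ in $X$ such that $(J(u_n))$ is bounded and $J'(u_n)\rightarrow 0$ has a convergent subsequence. *)

theory Defs
  imports "HOL-Analysis.Analysis"
begin

definition C1_map :: "('a::real_normed_vector \<Rightarrow> 'b::real_normed_vector) \<Rightarrow> bool" where
  "C1_map f \<longleftrightarrow> (\<exists>f' :: 'a \<Rightarrow> ('a \<Rightarrow>\<^sub>L 'b).
      (\<forall>x. (f has_derivative blinfun_apply (f' x)) (at x)) \<and> continuous_on UNIV f')"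

definition diffeomorphism :: "('a::real_normed_vector \<Rightarrow> 'b::real_normed_vector) \<Rightarrow> bool" where
  "diffeomorphism f \<longleftrightarrow> bij f \<and> C1_map f \<and> C1_map (inv f)"

text \<open>Palais--Smale condition for a (C1) functional J; J' ranges over its
  Frechet derivative (which is unique).\<close>
definition palais_smale :: "('a::real_normed_vector \<Rightarrow> real) \<Rightarrow> bool" where
  "palais_smale J \<longleftrightarrow> (\<forall>(J' :: 'a \<Rightarrow> ('a \<Rightarrow>\<^sub>L real)) (u :: nat \<Rightarrow> 'a).
      (\<forall>x. (J has_derivative blinfun_apply (J' x)) (at x)) \<longrightarrow>
      bounded (range (\<lambda>n. J (u n))) \<longrightarrow> (\<lambda>n. J' (u n)) \<longlonglongrightarrow> 0 \<longrightarrow>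
      (\<exists>r. strict_mono r \<and> convergent (u \<circ> r)))"

end

theory Submission
  imports Defs
begin

lemma blinfun_inverse_exists:
  fixes A :: "'a::real_normed_vector \<Rightarrow>\<^sub>L 'b::real_normed_vector"
  assumes surj: "range (blinfun_apply A) = UNIV"
    and a: "a > 0" and lb: "\<And>h. norm (A h) \<ge> a * norm h"
  obtains Li :: "'b \<Rightarrow>\<^sub>L 'a" where "\<And>h. Li (A h) = h" "\<And>k. A (Li k) = k" "norm Li \<le> 1 / a"
proof -
  have inj: "inj (blinfun_apply A)"
  proof (rule injI)
    fix x y assume "A x = A y"
    then have "A (x - y) = 0" by (simp add: blinfun.diff_right)
    then have "a * norm (x - y) \<le> 0" using lb[of "x-y"] by simp
    then show "x = y" using a by (simp add: mult_le_0_iff)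
  qed
  define g where "g = inv (blinfun_apply A)"
  have Ag: "A (g k) = k" for k
    using surj unfolding g_def by (metis f_inv_into_f UNIV_I)
  have gA: "g (A h) = h" for h
    using inj unfolding g_def by (simp add: inv_f_f)
  have bl: "bounded_linear g"
  proof (rule bounded_linear_intro[where K="1/a"])
    fix x y show "g (x + y) = g x + g y"
      by (metis Ag blinfun.add_right gA)
  next
    fix r x show "g (r *\<^sub>R x) = r *\<^sub>R g x"
      by (metis Ag blinfun.scaleR_right gA)
  next
    fix x
    have "a * norm (g x) \<le> norm x" using lb[of "g x"] Ag by simp
    then show "norm (g x) \<le> norm x * (1 / a)" using a by (simp add: field_simps)
  qed
  show ?thesis
  proof (rule that[of "Blinfun g"])
    show "Blinfun g (A h) = h" for h using bl gA by (simp add: bounded_linear_Blinfun_apply)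
    show "A (Blinfun g k) = k" for k using bl Ag by (simp add: bounded_linear_Blinfun_apply)
    show "norm (Blinfun g) \<le> 1 / a"
    proof (rule norm_blinfun_bound)
      show "0 \<le> 1/a" using a by simp
      fix x
      have "a * norm (g x) \<le> norm x" using lb[of "g x"] Ag by simp
      then show "norm (Blinfun g x) \<le> 1 / a * norm x" using a bl
        by (simp add: bounded_linear_Blinfun_apply field_simps)
    qed
  qed
qed

lemma local_homeo:
  fixes f :: "'a::banach \<Rightarrow> 'b::real_normed_vector"
    and f' :: "'a \<Rightarrow> ('a \<Rightarrow>\<^sub>L 'b)" and Li :: "'b \<Rightarrow>\<^sub>L 'a"
  assumes derf: "\<And>x. (f has_derivative blinfun_apply (f' x)) (at x)"
    and contf': "continuous_on UNIV f'"
    and LiA: "\<And>h. Li (f' x0 h) = h" and ALi: "\<And>k. f' x0 (Li k) = k"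
    and r: "r > 0"
  obtains U V g where "open U" "x0 \<in> U" "U \<subseteq> ball x0 r" "open V" "f x0 \<in> V"
     "homeomorphism U V f g"
proof -
  define K where "K = norm Li + 1"
  have K: "K > 0" "norm Li \<le> K" unfolding K_def by (auto intro: add_nonneg_pos)
  have "continuous (at x0) f'" using contf' by (simp add: continuous_on_eq_continuous_at)
  then obtain d where d: "d > 0" "\<And>x. dist x x0 < d \<Longrightarrow> dist (f' x) (f' x0) < 1/(2*K)"
    unfolding continuous_at_eps_delta using K by (metis divide_pos_pos mult_pos_pos zero_less_numeral zero_less_one)
  define \<delta> where "\<delta> = min (d/2) (r/2)"
  have \<delta>: "\<delta> > 0" "\<delta> < r" unfolding \<delta>_def using d r by auto
  have close: "norm (f' x - f' x0) \<le> 1/(2*K)" if "x \<in> cball x0 \<delta>" for x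
  proof -
    have "dist x x0 < d" using that \<delta>_def d by (auto simp: dist_commute)
    then show ?thesis using d(2)[of x] by (simp add: dist_norm)
  qed
  let ?D = "cball x0 \<delta>"
  define w where "w x = x - Li (f x)" for x
  have Dw: "(w has_derivative blinfun_apply (id_blinfun - (Li o\<^sub>L f' x))) (at x within ?D)" for x
    unfolding w_def
    by (auto intro!: derivative_eq_intros derf[THEN has_derivative_at_withinI]
         simp: blinfun.diff_left)
  have onw: "onorm (blinfun_apply (id_blinfun - (Li o\<^sub>L f' x))) \<le> 1/2" if "x \<in> ?D" for x
  proof -
    have eq: "id_blinfun - (Li o\<^sub>L f' x) = Li o\<^sub>L (f' x0 - f' x)"
      by (rule blinfun_eqI) (simp add: LiA blinfun.diff_left blinfun.diff_right)
    have "norm (Li o\<^sub>L (f' x0 - f' x)) \<le> norm Li * norm (f' x0 - f' x)"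
      by (rule norm_blinfun_compose)
    also have "\<dots> \<le> K * (1/(2*K))"
      using close[OF that] K by (intro mult_mono) (auto simp: norm_minus_commute)
    also have "\<dots> = 1/2" using K by simp
    finally show ?thesis by (simp add: eq norm_blinfun.rep_eq)
  qed
  have wlip: "norm (w x - w y) \<le> 1/2 * norm (x - y)" if "x \<in> ?D" "y \<in> ?D" for x y
    using differentiable_bound[OF convex_cball Dw onw that] .
  have key: "norm (x - y) \<le> 2 * norm (Li (f x - f y))" if "x \<in> ?D" "y \<in> ?D" for x y
  proof -
    have "w x - w y = (x - y) - Li (f x - f y)" by (simp add: w_def blinfun.diff_right)
    then have "norm ((x - y) - Li (f x - f y)) \<le> 1/2 * norm (x - y)" using wlip[OF that] by simp
    moreover have "norm (x - y) \<le> norm ((x - y) - Li (f x - f y)) + norm (Li (f x - f y))"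
      by (metis diff_add_cancel norm_triangle_ineq)
    ultimately show ?thesis by simp
  qed
  have injD: "x = y" if "x \<in> ?D" "y \<in> ?D" "f x = f y" for x y
    using key[OF that(1,2)] that(3) by simp
  define V where "V = {y. norm (Li (y - f x0)) < \<delta>/2}"
  have exist: "\<exists>x \<in> ball x0 \<delta>. f x = y" if "y \<in> V" for y
  proof -
    let ?u = "\<lambda>x. x + Li (y - f x)"
    have ueq: "?u x = w x + Li y" for x by (simp add: w_def blinfun.diff_right)
    have uin: "?u x \<in> ball x0 \<delta>" if "x \<in> ?D" for x
    proof -
      have "norm (?u x - ?u x0) \<le> 1/2 * norm (x - x0)" using wlip[OF that, of x0] \<delta> by (simp add: ueq)
      also have "\<dots> \<le> \<delta>/2" using that by (simp add: dist_norm norm_minus_commute)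
      finally have a: "norm (?u x - ?u x0) \<le> \<delta>/2" .
      have b: "norm (?u x0 - x0) < \<delta>/2" using \<open>y \<in> V\<close> by (simp add: V_def)
      have "norm (?u x - x0) \<le> norm (?u x - ?u x0) + norm (?u x0 - x0)"
        using norm_triangle_ineq[of "?u x - ?u x0" "?u x0 - x0"] by simp
      then show ?thesis using a b by (simp add: dist_norm norm_minus_commute)
    qed
    have "\<exists>!x\<in>?D. ?u x = x"
    proof (rule Banach_fix[where c="1/2"])
      show "complete ?D" by (simp add: complete_eq_closed)
      show "?D \<noteq> {}" using \<delta> by auto
      show "?u ` ?D \<subseteq> ?D" using uin by (force simp: less_imp_le)
      fix x z assume "x \<in> ?D" "z \<in> ?D"
      then show "dist (?u x) (?u z) \<le> 1/2 * dist x z"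
        using wlip[of x z] by (simp add: ueq dist_norm)
    qed auto
    then obtain x where x: "x \<in> ?D" "?u x = x" by blast
    then have "Li (y - f x) = 0" by simp
    then have "y - f x = 0" by (metis ALi blinfun.zero_right)
    then show ?thesis using uin[OF x(1)] x(2) by (metis eq_iff_diff_eq_0)
  qed
  define g where "g y = (THE x. x \<in> ball x0 \<delta> \<and> f x = y)" for y
  have g: "g y \<in> ball x0 \<delta> \<and> f (g y) = y" if "y \<in> V" for y
  proof -
    have "\<exists>!x. x \<in> ball x0 \<delta> \<and> f x = y"
      using exist[OF that] injD by (metis ball_subset_cball subsetD)
    then show ?thesis unfolding g_def by (rule theI')
  qed
  define U where "U = ball x0 \<delta> \<inter> f -` V"
  have contf: "continuous_on UNIV f"
    using derf by (meson continuous_at_imp_continuous_on has_derivative_continuous)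
  show ?thesis
  proof (rule that[of U V g])
    show "open V" unfolding V_def
      by (intro open_Collect_less continuous_intros) (auto intro: continuous_intros simp: blinfun.bounded_linear_right)
    show "open U" unfolding U_def using \<open>open V\<close> contf
      by (intro open_Int open_ball) (simp add: open_vimage)
    show "f x0 \<in> V" using \<delta> by (simp add: V_def)
    then show "x0 \<in> U" using \<delta> by (simp add: U_def)
    show "U \<subseteq> ball x0 r" using \<delta> by (auto simp: U_def)
    show "homeomorphism U V f g"
    proof (rule homeomorphismI)
      show "continuous_on U f" using contf continuous_on_subset by blast
      have "(2 * norm Li)-lipschitz_on V g"
      proof (rule lipschitz_onI)
        fix y y' assume "y \<in> V" "y' \<in> V"
        then have "norm (g y - g y') \<le> 2 * norm (Li (y - y'))"
          using key[of "g y" "g y'"] g[of y] g[of y'] by (force simp: less_imp_le)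
        also have "\<dots> \<le> 2 * (norm Li * norm (y - y'))"
          by (simp add: norm_blinfun)
        finally show "dist (g y) (g y') \<le> 2 * norm Li * dist y y'" by (simp add: dist_norm)
      qed simp
      then show "continuous_on V g" by (rule lipschitz_on_continuous_on)
      show "f ` U \<subseteq> V" by (auto simp: U_def)
      show "g ` V \<subseteq> U" using g by (auto simp: U_def)
      show "g (f x) = x" if "x \<in> U" for x
        using that g[of "f x"] injD[of "g (f x)" x] by (auto simp: U_def)
      show "f (g y) = y" if "y \<in> V" for y using g that by auto
    qed
  qed
qed

lemma ekeland:
  fixes \<phi> :: "'a::banach \<Rightarrow> real"
  assumes cont: "continuous_on UNIV \<phi>" and lb: "\<And>x. \<phi> x \<ge> 0" and k: "k > 0"
  shows "\<exists>z. \<phi> z + k * norm (z - x0) \<le> \<phi> x0 \<and> (\<forall>w. \<phi> z \<le> \<phi> w + k * norm (w - z))"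
proof -
  define S where "S x = {w. \<phi> w + k * norm (w - x) \<le> \<phi> x}" for x
  have Srefl: "x \<in> S x" for x by (simp add: S_def)
  have Strans: "w \<in> S u" if "w \<in> S v" "v \<in> S u" for u v w
  proof -
    have "norm (w - u) \<le> norm (w - v) + norm (v - u)"
      using norm_triangle_ineq[of "w - v" "v - u"] by simp
    then have "k * norm (w - u) \<le> k * norm (w - v) + k * norm (v - u)"
      using k by (metis distrib_left mult_left_mono less_imp_le)
    then show ?thesis using that unfolding S_def by simp
  qed
  have bdd: "bdd_below (\<phi> ` S x)" for x using lb by (intro bdd_belowI[where m=0]) auto
  have ex: "\<exists>w. w \<in> S x \<and> \<phi> w \<le> Inf (\<phi> ` S x) + (1/2)^n" for x n
  proof -
    have "Inf (\<phi> ` S x) < Inf (\<phi> ` S x) + (1/2)^n" by simp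
    then obtain v where "v \<in> \<phi> ` S x" "v < Inf (\<phi> ` S x) + (1/2)^n"
      using cInf_lessD[of "\<phi> ` S x"] Srefl by blast
    then show ?thesis by (auto intro: less_imp_le)
  qed
  define nxt where "nxt x n = (SOME w. w \<in> S x \<and> \<phi> w \<le> Inf (\<phi> ` S x) + (1/2)^n)" for x n
  have nxt: "nxt x n \<in> S x \<and> \<phi> (nxt x n) \<le> Inf (\<phi> ` S x) + (1/2)^n" for x n
    unfolding nxt_def by (rule someI_ex[OF ex])
  define xs where "xs = rec_nat x0 (\<lambda>n x. nxt x n)"
  have xs0: "xs 0 = x0" and xsS: "xs (Suc n) = nxt (xs n) n" for n by (simp_all add: xs_def)
  have mono: "xs m \<in> S (xs n)" if "n \<le> m" for m n
    using that
  proof (induction m)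
    case 0 then show ?case by (simp add: Srefl)
  next
    case (Suc m)
    show ?case
    proof (cases "n = Suc m")
      case True then show ?thesis by (simp add: Srefl)
    next
      case False
      then have "xs m \<in> S (xs n)" using Suc by simp
      moreover have "xs (Suc m) \<in> S (xs m)" using nxt by (simp add: xsS)
      ultimately show ?thesis using Strans by blast
    qed
  qed
  have small: "k * norm (w - xs (Suc n)) \<le> (1/2)^n" if "w \<in> S (xs (Suc n))" for w n
  proof -
    have "w \<in> S (xs n)" using Strans[OF that] nxt by (simp add: xsS)
    then have "Inf (\<phi> ` S (xs n)) \<le> \<phi> w" using bdd by (auto intro: cInf_lower)
    moreover have "\<phi> (xs (Suc n)) \<le> Inf (\<phi> ` S (xs n)) + (1/2)^n" using nxt by (simp add: xsS)
    moreover have "\<phi> w + k * norm (w - xs (Suc n)) \<le> \<phi> (xs (Suc n))" using that by (simp add: S_def)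
    ultimately show ?thesis by simp
  qed
  have arch: "\<exists>n. (1/2::real)^n < e" if "e > 0" for e
    using real_arch_pow_inv[OF that, of "1/2"] by simp
  have dist_bound: "norm (xs m - xs m') \<le> 2 * (1/2)^n / k" if "Suc n \<le> m" "Suc n \<le> m'" for m m' n
  proof -
    have "k * norm (xs m - xs (Suc n)) \<le> (1/2)^n" "k * norm (xs m' - xs (Suc n)) \<le> (1/2)^n"
      using small mono that by auto
    moreover have "norm (xs m - xs m') \<le> norm (xs m - xs (Suc n)) + norm (xs m' - xs (Suc n))"
      using norm_triangle_ineq[of "xs m - xs (Suc n)" "xs (Suc n) - xs m'"]
      by (simp add: norm_minus_commute)
    ultimately have "k * norm (xs m - xs m') \<le> 2 * (1/2)^n"
      using k by (smt (verit) distrib_left mult_left_mono)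
    then show ?thesis using k by (simp add: field_simps)
  qed
  have "Cauchy xs"
  proof (rule metric_CauchyI)
    fix e :: real assume "e > 0"
    then obtain n where n: "(1/2::real)^n < e * k / 2" using arch[of "e * k / 2"] k by auto
    show "\<exists>M. \<forall>m\<ge>M. \<forall>n\<ge>M. dist (xs m) (xs n) < e"
    proof (intro exI allI impI)
      fix m m' assume "Suc n \<le> m" "Suc n \<le> m'"
      then have "dist (xs m) (xs m') \<le> 2 * (1/2)^n / k" using dist_bound by (simp add: dist_norm)
      also have "\<dots> < e" using n k by (simp add: field_simps)
      finally show "dist (xs m) (xs m') < e" .
    qed
  qed
  then obtain z where lim: "xs \<longlonglongrightarrow> z" using Cauchy_convergent_iff convergent_def by blast
  have zS: "z \<in> S (xs n)" for n
  proof -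
    have "closed (S (xs n))" unfolding S_def
      by (intro closed_Collect_le continuous_intros continuous_on_subset[OF cont]) auto
    moreover have "eventually (\<lambda>m. xs m \<in> S (xs n)) sequentially"
      using mono by (auto simp: eventually_sequentially)
    ultimately show ?thesis using lim by (intro Lim_in_closed_set) auto
  qed
  show ?thesis
  proof (intro exI conjI allI)
    show "\<phi> z + k * norm (z - x0) \<le> \<phi> x0" using zS[of 0] by (simp add: S_def xs0)
    fix w
    show "\<phi> z \<le> \<phi> w + k * norm (w - z)"
    proof (rule ccontr)
      assume neg: "\<not> ?thesis"
      then have wz: "w \<in> S z" by (simp add: S_def)
      have "k * norm (w - z) \<le> 2 * (1/2)^n" for n
      proof -
        have "w \<in> S (xs (Suc n))" using Strans[OF wz zS] .
        then have "k * norm (w - xs (Suc n)) \<le> (1/2)^n" by (rule small)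
        moreover have "k * norm (z - xs (Suc n)) \<le> (1/2)^n" using small zS by blast
        moreover have "norm (w - z) \<le> norm (w - xs (Suc n)) + norm (z - xs (Suc n))"
          using norm_triangle_ineq[of "w - xs (Suc n)" "xs (Suc n) - z"]
          by (simp add: norm_minus_commute)
        ultimately show ?thesis using k
          by (smt (verit) distrib_left mult_left_mono)
      qed
      then have "norm (w - z) = 0"
      proof -
        assume h: "\<And>n. k * norm (w - z) \<le> 2 * (1/2)^n"
        show ?thesis
        proof (rule ccontr)
          assume "norm (w - z) \<noteq> 0"
          then have "k * norm (w - z) / 2 > 0" using k by simp
          then obtain n where "(1/2::real)^n < k * norm (w - z) / 2" using arch by blast
          then show False using h[of n] by simp
        qed
      qed
      then show False using neg by simp
    qed
  qed
qed

lemma ekeland_deriv: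
  fixes \<phi> :: "'a::real_normed_vector \<Rightarrow> real"
  assumes der: "(\<phi> has_derivative blinfun_apply D) (at z)"
   and ek: "\<And>w. \<phi> z \<le> \<phi> w + k * norm (w - z)" and k: "k \<ge> 0"
  shows "norm D \<le> k"
proof -
  have one: "- D h \<le> k * norm h" for h
  proof (rule ccontr)
    assume neg: "\<not> ?thesis"
    define g where "g t = \<phi> (z + t *\<^sub>R h) + t * (k * norm h)" for t :: real
    have "((\<lambda>t. z + t *\<^sub>R h) has_derivative (\<lambda>t. t *\<^sub>R h)) (at 0)"
      by (auto intro!: derivative_eq_intros)
    moreover have "(\<phi> has_derivative blinfun_apply D) (at (z + 0 *\<^sub>R h))" using der by simp
    ultimately have "((\<lambda>t. \<phi> (z + t *\<^sub>R h)) has_derivative (\<lambda>t. D (t *\<^sub>R h))) (at 0)"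
      using has_derivative_compose[of "\<lambda>t. z + t *\<^sub>R h" _ 0 UNIV \<phi>] by (simp add: o_def)
    then have "(g has_derivative (\<lambda>t. t * D h + t * (k * norm h))) (at 0)"
      unfolding g_def by (auto intro!: derivative_eq_intros simp: blinfun.scaleR_right)
    then have "DERIV g 0 :> (D h + k * norm h)"
      by (rule has_derivative_imp_has_field_derivative) (simp add: algebra_simps)
    then obtain d where d: "d > 0" "\<And>t. t > 0 \<Longrightarrow> t < d \<Longrightarrow> g 0 > g (0 + t)"
    proof -
      have "D h + k * norm h < 0" using neg by simp
      from DERIV_neg_dec_right[OF \<open>DERIV g 0 :> _\<close> this] show ?thesis using that by auto
    qed
    have "g 0 > g (d/2)" using d by simp
    moreover have "g 0 \<le> g (d/2)" using ek[of "z + (d/2) *\<^sub>R h"] d(1)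
      by (simp add: g_def mult.assoc mult.left_commute)
    ultimately show False by simp
  qed
  show ?thesis
  proof (rule norm_blinfun_bound[OF k])
    fix h
    have "D h \<le> k * norm h" using one[of "-h"] by (simp add: blinfun.minus_right)
    then show "norm (D h) \<le> k * norm h" using one[of h] by simp
  qed
qed

lemma proper_seq:
  fixes f :: "'a::banach \<Rightarrow> 'b::banach"
    and f' :: "'a \<Rightarrow> ('a \<Rightarrow>\<^sub>L 'b)"
    and \<eta> :: "'b \<Rightarrow> real"
    and \<eta>' :: "'b \<Rightarrow> ('b \<Rightarrow>\<^sub>L real)"
  assumes f_deriv: "\<And>x. (f has_derivative blinfun_apply (f' x)) (at x)"
    and eta_deriv: "\<And>x. (\<eta> has_derivative blinfun_apply (\<eta>' x)) (at x)"
    and eta_nonneg: "\<And>x. \<eta> x \<ge> 0"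
    and eta0: "\<eta> 0 = 0"
    and c2: "\<And>y. palais_smale (\<lambda>x. \<eta> (f x - y))"
    and lim: "(\<lambda>n. f (x n)) \<longlonglongrightarrow> y"
  shows "\<exists>r p. strict_mono r \<and> (x \<circ> r) \<longlonglongrightarrow> p"
proof -
  define \<phi> where "\<phi> = (\<lambda>u. \<eta> (f u - y))"
  define J' where "J' u = \<eta>' (f u - y) o\<^sub>L f' u" for u
  have contf: "continuous_on UNIV f"
    using f_deriv by (meson continuous_at_imp_continuous_on has_derivative_continuous)
  have conteta: "continuous_on UNIV \<eta>"
    using eta_deriv by (meson continuous_at_imp_continuous_on has_derivative_continuous)
  have Jder: "(\<phi> has_derivative blinfun_apply (J' u)) (at u)" for u
  proof -
    have "((\<lambda>u. f u - y) has_derivative blinfun_apply (f' u)) (at u)"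
      using f_deriv[of u] by (auto intro!: derivative_eq_intros)
    from has_derivative_compose[OF this eta_deriv]
    have "((\<lambda>x. \<eta> (f x - y)) has_derivative (\<lambda>h. \<eta>' (f u - y) (f' u h))) (at u)" by (simp add: o_def)
    moreover have "blinfun_apply (J' u) = (\<lambda>h. \<eta>' (f u - y) (f' u h))" by (rule ext) (simp add: J'_def)
    ultimately show ?thesis by (simp add: \<phi>_def)
  qed
  have contphi: "continuous_on UNIV \<phi>" unfolding \<phi>_def
    by (intro continuous_on_compose2[OF conteta] continuous_intros contf) auto
  have phinn: "\<phi> u \<ge> 0" for u by (simp add: \<phi>_def eta_nonneg)
  define e where "e = (\<lambda>n. \<phi> (x n))"
  have e0: "e \<longlonglongrightarrow> 0"
  proof -
    have "(\<lambda>n. f (x n) - y) \<longlonglongrightarrow> 0" using lim by (simp add: LIM_zero)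
    moreover have "isCont \<eta> 0" using conteta by (simp add: continuous_on_eq_continuous_at)
    ultimately have "(\<lambda>n. \<eta> (f (x n) - y)) \<longlonglongrightarrow> \<eta> 0" by (rule isCont_tendsto_compose[rotated])
    then show ?thesis by (simp add: e_def \<phi>_def eta0)
  qed
  define k where "k = (\<lambda>n. sqrt (e n + 1 / (real n + 1)))"
  have enn: "e n \<ge> 0" for n by (simp add: e_def phinn)
  have kpos: "k n > 0" for n unfolding k_def using enn[of n] by (simp add: add_nonneg_pos)
  have k0: "k \<longlonglongrightarrow> 0"
  proof -
    have "(\<lambda>n. 1 / (real n + 1)) \<longlonglongrightarrow> 0" using LIMSEQ_inverse_real_of_nat_add[of 0] by (simp add: inverse_eq_divide add.commute)
    then have "(\<lambda>n. e n + 1 / (real n + 1)) \<longlonglongrightarrow> 0 + 0" by (intro tendsto_add e0)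
    then show ?thesis unfolding k_def by (metis add_0 real_sqrt_zero tendsto_real_sqrt)
  qed
  have "\<forall>n. \<exists>z. \<phi> z + k n * norm (z - x n) \<le> \<phi> (x n) \<and> (\<forall>w. \<phi> z \<le> \<phi> w + k n * norm (w - z))"
    using ekeland[OF contphi phinn kpos] by blast
  then obtain z where z1: "\<And>n. \<phi> (z n) + k n * norm (z n - x n) \<le> e n"
      and z2: "\<And>n w. \<phi> (z n) \<le> \<phi> w + k n * norm (w - z n)"
    unfolding e_def by metis
  have nJ: "norm (J' (z n)) \<le> k n" for n
    using ekeland_deriv[OF Jder z2] kpos[of n] by simp
  have J0: "(\<lambda>n. J' (z n)) \<longlonglongrightarrow> 0"
    by (rule tendsto_norm_zero_cancel, rule Lim_null_comparison[OF _ k0]) (use nJ in auto)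
  have bnd: "bounded (range (\<lambda>n. \<phi> (z n)))"
  proof -
    obtain B where B: "\<And>n. norm (e n) \<le> B" using convergent_imp_Bseq[of e] e0 Bseq_def
      by (metis convergent_def)
    have "norm (\<phi> (z n)) \<le> B" for n
      using z1[of n] kpos[of n] phinn[of "z n"] B[of n] enn[of n]
      by (smt (verit) mult_nonneg_nonneg norm_ge_zero real_norm_def)
    then show ?thesis unfolding bounded_iff by blast
  qed
  obtain r where r: "strict_mono r" "convergent (z \<circ> r)"
    using c2[of y, unfolded palais_smale_def, rule_format, of J' z] Jder bnd J0
    unfolding \<phi>_def by blast
  then obtain p where p: "(z \<circ> r) \<longlonglongrightarrow> p" by (auto simp: convergent_def)
  have dxz: "norm (x n - z n) \<le> sqrt (e n)" for n
  proof -
    have a: "k n * norm (z n - x n) \<le> e n" using z1[of n] phinn[of "z n"] by simp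
    have "sqrt (e n) \<le> k n" unfolding k_def by (simp add: real_sqrt_le_mono)
    then have "sqrt (e n) * norm (z n - x n) \<le> e n"
      using a by (meson mult_right_mono norm_ge_zero order_trans)
    then have "sqrt (e n) * norm (z n - x n) \<le> sqrt (e n) * sqrt (e n)"
      using enn[of n] by simp
    show ?thesis
    proof (cases "e n = 0")
      case True
      then have "k n * norm (z n - x n) \<le> 0" using a by simp
      then have "norm (z n - x n) \<le> 0" using kpos[of n] by (simp add: mult_le_0_iff)
      then show ?thesis using enn[of n] by (simp add: norm_minus_commute)
    next
      case False
      then have "sqrt (e n) > 0" using enn[of n] by simp
      then show ?thesis using \<open>sqrt (e n) * norm (z n - x n) \<le> sqrt (e n) * sqrt (e n)\<close>
        by (metis mult_le_cancel_left_pos norm_minus_commute)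
    qed
  qed
  have "(\<lambda>n. x (r n) - z (r n)) \<longlonglongrightarrow> 0"
  proof (rule tendsto_norm_zero_cancel, rule Lim_null_comparison)
    show "\<forall>\<^sub>F n in sequentially. norm (norm (x (r n) - z (r n))) \<le> sqrt (e (r n))"
      using dxz by simp
    have "(\<lambda>n. sqrt (e n)) \<longlonglongrightarrow> 0" using tendsto_real_sqrt[OF e0] by simp
    then show "(\<lambda>n. sqrt (e (r n))) \<longlonglongrightarrow> 0"
      using LIMSEQ_subseq_LIMSEQ[OF _ r(1)] by (simp add: o_def)
  qed
  then have "(\<lambda>n. z (r n) + (x (r n) - z (r n))) \<longlonglongrightarrow> p + 0"
    using p by (intro tendsto_add) (auto simp: o_def)
  then show ?thesis using r(1) by (auto simp: o_def)
qed

lemma clopen_UNIV_nv: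
  fixes T :: "'a::real_normed_vector set"
  assumes "open T" "closed T" "T \<noteq> {}"
  shows "T = UNIV"
  using clopen[of T] assms by blast

lemma proper_local_homeo_bij:
  fixes f :: "'a::real_normed_vector \<Rightarrow> 'b::real_normed_vector"
  assumes contf: "continuous_on UNIV f"
    and lochom: "\<And>x r. r > 0 \<Longrightarrow> \<exists>U V g. open U \<and> x \<in> U \<and> U \<subseteq> ball x r \<and> open V \<and> f x \<in> V
                        \<and> homeomorphism U V f g"
    and proper: "\<And>(xs :: nat \<Rightarrow> 'a) y. (\<lambda>n. f (xs n)) \<longlonglongrightarrow> y \<Longrightarrow> \<exists>r p. strict_mono r \<and> (xs \<circ> r) \<longlonglongrightarrow> p"
  obtains g where "continuous_on UNIV g" "\<And>y. f (g y) = y" "\<And>x. g (f x) = x"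
proof -
  have limf: "(\<lambda>n. f (xs n)) \<longlonglongrightarrow> f p" if "xs \<longlonglongrightarrow> p" for xs p
  proof -
    have "isCont f p" using contf by (simp add: continuous_on_eq_continuous_at)
    then show ?thesis using that by (rule isCont_tendsto_compose)
  qed
  have closedmap: "closed (f ` C)" if "closed C" for C
  proof (rule closed_sequential_limits[THEN iffD2], intro allI impI, elim conjE)
    fix ys l assume ys: "\<forall>n. ys n \<in> f ` C" "ys \<longlonglongrightarrow> l"
    then have "\<forall>n. \<exists>x. x \<in> C \<and> ys n = f x" by blast
    then obtain xs where xs: "\<And>n. xs n \<in> C" "\<And>n. ys n = f (xs n)" by (auto dest!: choice)
    have "ys = (\<lambda>n. f (xs n))" using xs(2) by (rule ext)
    then have "(\<lambda>n. f (xs n)) \<longlonglongrightarrow> l" using ys(2) by simp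
    then obtain r p where r: "strict_mono r" "(xs \<circ> r) \<longlonglongrightarrow> p" using proper by blast
    have "p \<in> C" using closed_sequentially[OF that _ r(2)] xs by simp
    moreover have "(\<lambda>n. f ((xs \<circ> r) n)) \<longlonglongrightarrow> f p" by (rule limf[OF r(2)])
    moreover have "(\<lambda>n. f ((xs \<circ> r) n)) \<longlonglongrightarrow> l"
      using LIMSEQ_subseq_LIMSEQ[OF ys(2) r(1)] xs by (simp add: o_def)
    ultimately show "l \<in> f ` C" using LIMSEQ_unique by blast
  qed
  have surj: "range f = UNIV"
  proof (rule clopen_UNIV_nv)
    show "closed (range f)" using closedmap[of UNIV] by simp
    show "range f \<noteq> {}" by simp
    show "open (range f)"
      unfolding open_subopen[of "range f"]
    proof
      fix y assume "y \<in> range f"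
      then obtain x where "y = f x" by blast
      obtain U V g where "open V" "f x \<in> V" "homeomorphism U V f g"
        using lochom[of 1 x] by auto
      then have "V \<subseteq> range f" unfolding homeomorphism_def by blast
      then show "\<exists>T. open T \<and> y \<in> T \<and> T \<subseteq> range f"
        using \<open>y = f x\<close> \<open>open V\<close> \<open>f x \<in> V\<close> by blast
    qed
  qed
  have finfib: "finite (f -` {y})" for y
  proof -
    let ?F = "f -` {y}"
    have "compact ?F" unfolding compact_eq_seq_compact_metric
    proof (rule seq_compactI)
      fix xs :: "nat \<Rightarrow> 'a" assume "\<forall>n. xs n \<in> ?F"
      then have "(\<lambda>n. f (xs n)) \<longlonglongrightarrow> y" by simp
      then obtain r p where r: "strict_mono r" "(xs \<circ> r) \<longlonglongrightarrow> p" using proper by blast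
      have clF: "closed ?F" using contf by (intro continuous_closed_vimage) (auto simp: continuous_on_eq_continuous_at)
      have "p \<in> ?F" using closed_sequentially[OF clF _ r(2)] \<open>\<forall>n. xs n \<in> ?F\<close> by simp
      then show "\<exists>l\<in>?F. \<exists>r. strict_mono r \<and> (xs \<circ> r) \<longlonglongrightarrow> l" using r by blast
    qed
    have "\<forall>a. \<exists>U. open U \<and> a \<in> U \<and> inj_on f U"
    proof
      fix a obtain U V g where "open U" "a \<in> U" "homeomorphism U V f g" using lochom[of 1 a] by auto
      then show "\<exists>U. open U \<and> a \<in> U \<and> inj_on f U" unfolding homeomorphism_def by (meson inj_on_inverseI)
    qed
    then obtain N where N: "\<And>a. open (N a)" "\<And>a. a \<in> N a" "\<And>a. inj_on f (N a)" by (auto dest!: choice)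
    have cov: "?F \<subseteq> (\<Union>a\<in>?F. N a)" using N(2) by blast
    obtain D where D: "D \<subseteq> ?F" "finite D" "?F \<subseteq> (\<Union>d\<in>D. N d)"
      by (rule compactE_image[OF \<open>compact ?F\<close> N(1) cov])
    have "?F \<subseteq> D"
    proof
      fix a assume a: "a \<in> ?F"
      then obtain d where d: "d \<in> D" "a \<in> N d" using D by blast
      then have "f a = f d" using a D by auto
      then have "a = d" using N(2)[of d] N(3)[of d] d inj_onD[of f "N d" a d] by blast
      then show "a \<in> D" using d by simp
    qed
    then show ?thesis using D(2) finite_subset by blast
  qed
  have cov: "covering_space UNIV f UNIV"
  proof (rule covering_spaceI)
    show "continuous_on UNIV f" by (rule contf)
    show "f ` UNIV = UNIV" by (rule surj)
    fix y :: 'b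
    let ?F = "f -` {y}"
    have finF: "finite ?F" by (rule finfib)
    define P where "P = {(a,b). a \<in> ?F \<and> b \<in> ?F \<and> a \<noteq> b}"
    have finP: "finite P" unfolding P_def
      by (rule finite_subset[of _ "?F \<times> ?F"]) (use finF in auto)
    define r where "r = Min (insert 1 ((\<lambda>(a,b). dist a b / 2) ` P))"
    have rpos: "r > 0" unfolding r_def using finP
      by (subst Min_gr_iff) (auto simp: P_def)
    have rle: "r \<le> dist a b / 2" if "a \<in> ?F" "b \<in> ?F" "a \<noteq> b" for a b
    proof -
      have "(a,b) \<in> P" using that by (simp add: P_def)
      then show ?thesis unfolding r_def using finP by (intro Min_le) force+
    qed
    have "\<forall>a. \<exists>U V g. open U \<and> a \<in> U \<and> U \<subseteq> ball a r \<and> open V \<and> f a \<in> V \<and> homeomorphism U V f g"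
      using lochom rpos by blast
    then obtain U V G where UVG: "\<And>a. open (U a)" "\<And>a. a \<in> U a" "\<And>a. U a \<subseteq> ball a r"
        "\<And>a. open (V a)" "\<And>a. f a \<in> V a" "\<And>a. homeomorphism (U a) (V a) f (G a)"
      by metis
    have disj: "U a \<inter> U b = {}" if "a \<in> ?F" "b \<in> ?F" "a \<noteq> b" for a b
    proof (rule ccontr)
      assume "U a \<inter> U b \<noteq> {}"
      then obtain x where "x \<in> U a" "x \<in> U b" by blast
      then have "dist a x < r" "dist b x < r" using UVG(3) by (auto simp: subset_iff)
      then have "dist a b < 2 * r" using dist_triangle3[of a b x] by (simp add: dist_commute)
      then show False using rle[OF that] by simp
    qed
    define C where "C = UNIV - (\<Union>a\<in>?F. U a)"
    have "closed C" unfolding C_def using UVG(1) by (intro closed_Diff) auto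
    define T where "T = (\<Inter>a\<in>?F. V a) - f ` C"
    have "open T" unfolding T_def using closedmap[OF \<open>closed C\<close>] UVG(4) finF
      by (intro open_Diff open_INT) auto
    have yT: "y \<in> T"
    proof -
      have "y \<notin> f ` C"
      proof
        assume "y \<in> f ` C"
        then obtain c where "c \<in> C" "f c = y" by blast
        then show False using UVG(2)[of c] by (auto simp: C_def)
      qed
      moreover have "y \<in> V a" if "a \<in> ?F" for a using UVG(5)[of a] that by simp
      ultimately show ?thesis by (simp add: T_def)
    qed
    define u where "u a = U a \<inter> f -` T" for a
    have uopen: "open (u a)" for a
      unfolding u_def using UVG(1) \<open>open T\<close> contf by (intro open_Int) (simp_all add: open_vimage)
    show "\<exists>T. y \<in> T \<and> openin (top_of_set UNIV) T \<and>
             (\<exists>v. \<Union>v = UNIV \<inter> f -` T \<and> (\<forall>u\<in>v. openin (top_of_set UNIV) u) \<and>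
                 pairwise disjnt v \<and> (\<forall>u\<in>v. \<exists>q. homeomorphism u T f q))"
    proof (intro exI conjI)
      show "y \<in> T" by (rule yT)
      show "openin (top_of_set UNIV) T" using \<open>open T\<close> by simp
      show "\<Union>(u ` ?F) = UNIV \<inter> f -` T"
      proof
        show "\<Union>(u ` ?F) \<subseteq> UNIV \<inter> f -` T" by (auto simp: u_def)
        show "UNIV \<inter> f -` T \<subseteq> \<Union>(u ` ?F)"
        proof
          fix x assume "x \<in> UNIV \<inter> f -` T"
          then have "f x \<in> T" by simp
          then have "x \<notin> C" by (auto simp: T_def)
          then obtain a where "a \<in> ?F" "x \<in> U a" by (auto simp: C_def)
          then show "x \<in> \<Union>(u ` ?F)" using \<open>f x \<in> T\<close> by (auto simp: u_def)
        qed
      qed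
      show "\<forall>w\<in>u ` ?F. openin (top_of_set UNIV) w" using uopen by simp
      show "pairwise disjnt (u ` ?F)"
        unfolding pairwise_def disjnt_def
      proof (intro ballI impI)
        fix s t assume st: "s \<in> u ` ?F" "t \<in> u ` ?F" "s \<noteq> t"
        then obtain a b where ab: "a \<in> ?F" "b \<in> ?F" "s = u a" "t = u b" by blast
        then have "a \<noteq> b" using st by auto
        then have "U a \<inter> U b = {}" using disj ab by simp
        then show "s \<inter> t = {}" using ab by (auto simp: u_def)
      qed
      show "\<forall>w\<in>u ` ?F. \<exists>q. homeomorphism w T f q"
      proof
        fix w assume "w \<in> u ` ?F"
        then obtain a where a: "a \<in> ?F" "w = u a" by blast
        have TV: "T \<subseteq> V a" using a(1) by (auto simp: T_def)
        have "f ` u a = T"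
        proof
          show "f ` u a \<subseteq> T" by (auto simp: u_def)
          show "T \<subseteq> f ` u a"
          proof
            fix t assume "t \<in> T"
            then have "t \<in> V a" using TV by blast
            then have "G a t \<in> U a" "f (G a t) = t"
              using UVG(6)[of a] unfolding homeomorphism_def by auto
            then show "t \<in> f ` u a" using \<open>t \<in> T\<close> unfolding u_def by (metis IntI image_eqI vimageI)
          qed
        qed
        then have "homeomorphism (u a) T f (G a)"
          using homeomorphism_of_subsets[OF UVG(6)[of a] _ TV] by (auto simp: u_def)
        then show "\<exists>q. homeomorphism w T f q" using a by blast
      qed
    qed
  qed
  obtain x0 :: 'a where True by simp
  obtain g where g: "continuous_on UNIV g" "g \<in> UNIV \<rightarrow> UNIV" "g (f x0) = x0" "\<And>y. y \<in> UNIV \<Longrightarrow> f (g y) = id y"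
    by (rule covering_space_lift_strong[OF cov UNIV_I UNIV_I convex_imp_simply_connected[OF convex_UNIV]
          locally_path_connected_UNIV continuous_on_id]) auto
  define A where "A = {x. g (f x) = x}"
  have "A = UNIV"
  proof (rule clopen_UNIV_nv)
    show "A \<noteq> {}" using g(3) by (auto simp: A_def)
    have "continuous_on UNIV (\<lambda>x. g (f x))"
      by (rule continuous_on_compose2[OF g(1) contf]) simp
    then show "closed A" unfolding A_def
      by (intro closed_Collect_eq continuous_on_id) auto
    show "open A"
      unfolding open_subopen[of A]
    proof
      fix a assume "a \<in> A"
      obtain U V h where UVh: "open U" "a \<in> U" "homeomorphism U V f h" using lochom[of 1 a] by auto
      have gfc: "continuous_on UNIV (\<lambda>x. g (f x))" by fact
      define W where "W = U \<inter> (\<lambda>x. g (f x)) -` U"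
      have "open W" unfolding W_def using gfc UVh(1) by (intro open_Int) (simp_all add: open_vimage)
      moreover have "a \<in> W" using \<open>a \<in> A\<close> UVh(2) by (simp add: W_def A_def)
      moreover have "W \<subseteq> A"
      proof
        fix x assume "x \<in> W"
        then have "x \<in> U" "g (f x) \<in> U" by (auto simp: W_def)
        moreover have "f (g (f x)) = f x" using g(4) by simp
        ultimately have "h (f (g (f x))) = h (f x)" by simp
        then show "x \<in> A" using \<open>x \<in> U\<close> \<open>g (f x) \<in> U\<close> UVh(3)
          unfolding homeomorphism_def A_def by simp
      qed
      ultimately show "\<exists>T. open T \<and> a \<in> T \<and> T \<subseteq> A" by blast
    qed
  qed
  show ?thesis
  proof (rule that[of g])
    show "continuous_on UNIV g" by (rule g(1))
    show "f (g y) = y" for y using g(4) by simp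
    show "g (f x) = x" for x using \<open>A = UNIV\<close> by (auto simp: A_def)
  qed
qed
lemma inverse_C1:
  fixes f :: "'a::banach \<Rightarrow> 'b::banach"
    and f' :: "'a \<Rightarrow> ('a \<Rightarrow>\<^sub>L 'b)"
  assumes f_deriv: "\<And>x. (f has_derivative blinfun_apply (f' x)) (at x)"
    and f'_cont: "continuous_on UNIV f'"
    and c3: "\<And>x. range (blinfun_apply (f' x)) = UNIV"
            "\<And>x. \<exists>a>0. \<forall>h. norm (f' x h) \<ge> a * norm h"
    and contg: "continuous_on UNIV g" and fg: "\<And>y. f (g y) = y" and gf: "\<And>x. g (f x) = x"
  shows "C1_map g"
proof -
  define P where "P x L \<longleftrightarrow> (\<forall>h. L (f' x h) = h) \<and> (\<forall>k. f' x (L k) = k)" for x and L :: "'b \<Rightarrow>\<^sub>L 'a"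
  have exP: "\<exists>L. P x L" for x
  proof -
    obtain a where "a > 0" "\<forall>h. norm (f' x h) \<ge> a * norm h" using c3(2)[of x] by blast
    then obtain L :: "'b \<Rightarrow>\<^sub>L 'a" where "\<And>h. L (f' x h) = h" "\<And>k. f' x (L k) = k"
      using blinfun_inverse_exists[OF c3(1)[of x], of a] by blast
    then show ?thesis by (auto simp: P_def)
  qed
  define Li where "Li x = (SOME L. P x L)" for x
  have Li1: "Li x (f' x h) = h" and Li2: "f' x (Li x k) = k" for x h k
    using someI_ex[OF exP[of x]] unfolding Li_def P_def by auto
  have Lib: "norm (Li z k) \<le> (1/b) * norm k" if "b > 0" "\<And>h. norm (f' z h) \<ge> b * norm h" for z b k
  proof -
    have "b * norm (Li z k) \<le> norm k" using that(2)[of "Li z k"] by (simp add: Li2)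
    then show ?thesis using that(1) by (simp add: field_simps)
  qed
  have contLi: "continuous_on UNIV Li"
    unfolding continuous_on_iff
  proof (intro ballI allI impI)
    fix x :: 'a and e :: real assume "e > 0"
    obtain a where a: "a > 0" "\<And>h. norm (f' x h) \<ge> a * norm h" using c3(2)[of x] by blast
    define \<epsilon> where "\<epsilon> = min (a/2) (e * a * a / 2)"
    have "\<epsilon> > 0" using a \<open>e > 0\<close> by (simp add: \<epsilon>_def)
    obtain d where d: "d > 0" "\<And>z. dist z x < d \<Longrightarrow> dist (f' z) (f' x) < \<epsilon>"
      using f'_cont \<open>\<epsilon> > 0\<close> unfolding continuous_on_iff by (metis UNIV_I)
    show "\<exists>d>0. \<forall>z\<in>UNIV. dist z x < d \<longrightarrow> dist (Li z) (Li x) < e"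
    proof (intro exI conjI ballI impI)
      show "d > 0" by (rule d(1))
      fix z assume "dist z x < d"
      then have dz: "norm (f' z - f' x) < \<epsilon>" using d(2) by (simp add: dist_norm)
      have lbz: "norm (f' z h) \<ge> (a/2) * norm h" for h
      proof -
        have "norm ((f' z - f' x) h) \<le> norm (f' z - f' x) * norm h" by (rule norm_blinfun)
        also have "\<dots> \<le> (a/2) * norm h" using dz by (intro mult_right_mono) (auto simp: \<epsilon>_def)
        finally have "norm (f' z h - f' x h) \<le> (a/2) * norm h" by (simp add: blinfun.diff_left)
        moreover have "norm (f' x h) \<le> norm (f' z h) + norm (f' z h - f' x h)"
          using norm_triangle_ineq[of "f' z h" "f' x h - f' z h"] by (simp add: norm_minus_commute)
        ultimately show ?thesis using a(2)[of h] by simp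
      qed
      have eq: "(Li z - Li x) k = Li z ((f' x - f' z) (Li x k))" for k
        by (simp add: blinfun.diff_left blinfun.diff_right Li1 Li2)
      have "norm (Li z - Li x) \<le> (2/a) * norm (f' z - f' x) * (1/a)"
      proof (rule norm_blinfun_bound)
        show "0 \<le> 2 / a * norm (f' z - f' x) * (1 / a)" using a by simp
        fix k
        have "norm ((Li z - Li x) k) \<le> (1/(a/2)) * norm ((f' x - f' z) (Li x k))"
          unfolding eq using a by (intro Lib lbz) simp
        also have "\<dots> = (2/a) * norm ((f' x - f' z) (Li x k))" by simp
        also have "\<dots> \<le> (2/a) * (norm (f' x - f' z) * norm (Li x k))"
          using a by (intro mult_left_mono norm_blinfun) auto
        also have "\<dots> \<le> (2/a) * (norm (f' x - f' z) * ((1/a) * norm k))"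
          using a Lib[OF a(1) a(2)] by (intro mult_left_mono) auto
        finally show "norm ((Li z - Li x) k) \<le> 2 / a * norm (f' z - f' x) * (1 / a) * norm k"
          by (simp add: norm_minus_commute mult_ac)
      qed
      also have "\<dots> < (2/a) * (e * a * a / 2) * (1/a)"
        using dz a \<open>e > 0\<close> by (intro mult_strict_right_mono mult_strict_left_mono) (auto simp: \<epsilon>_def)
      also have "\<dots> = e" using a by (simp add: field_simps)
      finally show "dist (Li z) (Li x) < e" by (simp add: dist_norm)
    qed
  qed
  show ?thesis unfolding C1_map_def
  proof (intro exI conjI allI)
    show "continuous_on UNIV (\<lambda>y. Li (g y))"
      by (rule continuous_on_compose2[OF contLi contg]) simp
    fix y
    show "(g has_derivative blinfun_apply (Li (g y))) (at y)"
    proof (rule has_derivative_inverse_basic)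
      show "(f has_derivative blinfun_apply (f' (g y))) (at (g y))" by (rule f_deriv)
      show "bounded_linear (blinfun_apply (Li (g y)))" by (rule blinfun.bounded_linear_right)
      show "blinfun_apply (Li (g y)) \<circ> blinfun_apply (f' (g y)) = id" by (rule ext) (simp add: Li1)
      show "continuous (at y) g" using contg by (simp add: continuous_on_eq_continuous_at)
      show "open (UNIV :: 'b set)" by simp
    qed (auto simp: fg)
  qed
qed
theorem theorem5:
  fixes f :: "'a::banach \<Rightarrow> 'b::banach"
    and f' :: "'a \<Rightarrow> ('a \<Rightarrow>\<^sub>L 'b)"
    and \<eta> :: "'b \<Rightarrow> real"
    and \<eta>' :: "'b \<Rightarrow> ('b \<Rightarrow>\<^sub>L real)"
  assumes f_deriv: "\<And>x. (f has_derivative blinfun_apply (f' x)) (at x)"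
    and f'_cont: "continuous_on UNIV f'"
    and eta_deriv: "\<And>x. (\<eta> has_derivative blinfun_apply (\<eta>' x)) (at x)"
    and eta'_cont: "continuous_on UNIV \<eta>'"
    and eta_nonneg: "\<And>x. \<eta> x \<ge> 0"
    and c1: "\<And>x. \<eta> x = 0 \<longleftrightarrow> x = 0" "\<And>x. \<eta>' x = 0 \<longleftrightarrow> x = 0"
    and c2: "\<And>y. palais_smale (\<lambda>x. \<eta> (f x - y))"
    and c3: "\<And>x. range (blinfun_apply (f' x)) = UNIV"
            "\<And>x. \<exists>a>0. \<forall>h. norm (f' x h) \<ge> a * norm h"
    and c4: "\<exists>\<alpha>>0. \<exists>c>0. \<exists>M>0. \<forall>x. norm x \<le> M \<longrightarrow> \<eta> x \<ge> c * norm x powr \<alpha>"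
  shows "diffeomorphism f"
proof -
  have eta0: "\<eta> 0 = 0" using c1(1) by simp
  have contf: "continuous_on UNIV f"
    using f_deriv by (meson continuous_at_imp_continuous_on has_derivative_continuous)
  have lochom: "\<exists>U V g. open U \<and> x \<in> U \<and> U \<subseteq> ball x r \<and> open V \<and> f x \<in> V
                        \<and> homeomorphism U V f g" if rpos: "r > 0" for x r
  proof -
    obtain a where a: "a > 0" "\<And>h. norm (f' x h) \<ge> a * norm h" using c3(2)[of x] by blast
    obtain Li :: "'b \<Rightarrow>\<^sub>L 'a" where Li: "\<And>h. Li (f' x h) = h" "\<And>k. f' x (Li k) = k"
      using blinfun_inverse_exists[OF c3(1)[of x] a] by blast
    obtain U V g where "open U" "x \<in> U" "U \<subseteq> ball x r" "open V" "f x \<in> V" "homeomorphism U V f g"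
      by (rule local_homeo[OF f_deriv f'_cont Li rpos])
    then show ?thesis by blast
  qed
  have proper: "\<exists>r p. strict_mono r \<and> (xs \<circ> r) \<longlonglongrightarrow> p" if lim: "(\<lambda>n. f (xs n)) \<longlonglongrightarrow> y"
    for xs :: "nat \<Rightarrow> 'a" and y
    by (rule proper_seq[OF f_deriv eta_deriv eta_nonneg eta0 c2 lim])
  obtain g where g: "continuous_on UNIV g" "\<And>y. f (g y) = y" "\<And>x. g (f x) = x"
    by (rule proper_local_homeo_bij[OF contf lochom proper]) blast+
  have bij: "bij f" by (rule o_bij[of g]) (auto simp: g fun_eq_iff)
  have invf: "inv f = g" by (rule inv_equality) (auto simp: g)
  have C1f: "C1_map f" unfolding C1_map_def using f_deriv f'_cont by blast
  have C1g: "C1_map g" by (rule inverse_C1[OF f_deriv f'_cont c3 g])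
  show ?thesis unfolding diffeomorphism_def using bij C1f C1g invf by simp
qed

end
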